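(* Let $X$ be a compactum, let $n\geq2$, and let $f:X\to X$ be a function. Consider the statements: (1) $f$ is $TT_{++}$; (2) $F_n(f)$ is $TT_{++}$; (3) $SF_n(f)$ is $TT_{++}$. Then (2) and (3) are equivalent and (2) implies (1). Moreover, (1) does not imply (2) in general: there exist such $X$, $n$, $f$ with $f$ being $TT_{++}$ but $F_n(f)$ not $TT_{++}$.
   Context: A compactum is a nondegenerate compact, perfect, Hausdorff topological space. $F_n(X)$ is the set of nonempty subsets of $X$ with at most $n$ points, with the Vietoris topology; $F_1(X)=\{\{x\}:x\in X\}$; $F_n(f)(A)=f(A)$. $SF_n(X)=F_n(X)/F_1(X)$ is the quotient collapsing $F_1(X)$ to a point, $q$ the quotient map, $F_X=q(F_1(X))$, and $SF_n(f)(\chi)=q(F_n(f)(q^{-1}(\chi)))$ for $\chi\neq F_X$, $SF_n(f)(F_X)=F_X$. A function $g:Z\to Z$ is $TT_{++}$ if for every pair of nonempty open $U,V\subseteq Z$ the set $\{k\in\mathbb{N}: U\cap g^{-k}(V)\neq\emptyset\}$ is infinite. *)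

theory Defs
  imports "HOL-Analysis.Analysis"
begin

definition compactum :: "'a topology \<Rightarrow> bool" where
  "compactum X \<longleftrightarrow> compact_space X \<and> Hausdorff_space X \<and>
     (\<forall>x\<in>topspace X. \<not> openin X {x}) \<and> (\<exists>x\<in>topspace X. \<exists>y\<in>topspace X. x \<noteq> y)"

definition TTpp :: "'a topology \<Rightarrow> ('a \<Rightarrow> 'a) \<Rightarrow> bool" where
  "TTpp Z g \<longleftrightarrow> (\<forall>U V. openin Z U \<longrightarrow> openin Z V \<longrightarrow> U \<noteq> {} \<longrightarrow> V \<noteq> {} \<longrightarrow>
      infinite {k::nat. U \<inter> {x \<in> topspace Z. (g ^^ k) x \<in> V} \<noteq> {}})"

definition Fn_set :: "'a topology \<Rightarrow> nat \<Rightarrow> 'a set set" where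
  "Fn_set X n = {A. A \<subseteq> topspace X \<and> A \<noteq> {} \<and> finite A \<and> card A \<le> n}"

definition Fn :: "'a topology \<Rightarrow> nat \<Rightarrow> 'a set topology" where
  "Fn X n = topology_generated_by
     ({{A \<in> Fn_set X n. A \<subseteq> U} | U. openin X U} \<union>
      {{A \<in> Fn_set X n. A \<inter> U \<noteq> {}} | U. openin X U})"

definition Fn_map :: "('a \<Rightarrow> 'a) \<Rightarrow> 'a set \<Rightarrow> 'a set" where
  "Fn_map f A = f ` A"

text \<open>F_1(X), which is also the collapsed point F_X of SF_n(X).\<close>
definition F1_set :: "'a topology \<Rightarrow> 'a set set" where
  "F1_set X = {{x} | x. x \<in> topspace X}"

text \<open>Quotient map: points of SF_n(X) are the equivalence classes.\<close>
definition SFq :: "'a topology \<Rightarrow> 'a set \<Rightarrow> 'a set set" where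
  "SFq X A = (if A \<in> F1_set X then F1_set X else {A})"

definition SFn :: "'a topology \<Rightarrow> nat \<Rightarrow> 'a set set topology" where
  "SFn X n = topology (\<lambda>W. W \<subseteq> SFq X ` topspace (Fn X n) \<and>
                         openin (Fn X n) {A \<in> topspace (Fn X n). SFq X A \<in> W})"

definition SFn_map :: "'a topology \<Rightarrow> ('a \<Rightarrow> 'a) \<Rightarrow> 'a set set \<Rightarrow> 'a set set" where
  "SFn_map X f c = (if c = F1_set X then F1_set X
                     else SFq X (Fn_map f (the_elem c)))"

lemma istopology_SFn:
  "istopology (\<lambda>W. W \<subseteq> SFq X ` topspace (Fn X n) \<and>
                   openin (Fn X n) {A \<in> topspace (Fn X n). SFq X A \<in> W})"
  unfolding istopology_def
proof (rule conjI; intro allI impI)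
  fix S T assume S: "S \<subseteq> SFq X ` topspace (Fn X n) \<and> openin (Fn X n) {A \<in> topspace (Fn X n). SFq X A \<in> S}"
    and T: "T \<subseteq> SFq X ` topspace (Fn X n) \<and> openin (Fn X n) {A \<in> topspace (Fn X n). SFq X A \<in> T}"
  have eq: "{A \<in> topspace (Fn X n). SFq X A \<in> S \<inter> T} =
     {A \<in> topspace (Fn X n). SFq X A \<in> S} \<inter> {A \<in> topspace (Fn X n). SFq X A \<in> T}" by blast
  show "S \<inter> T \<subseteq> SFq X ` topspace (Fn X n) \<and>
     openin (Fn X n) {A \<in> topspace (Fn X n). SFq X A \<in> S \<inter> T}"
  proof
    show "S \<inter> T \<subseteq> SFq X ` topspace (Fn X n)" using S by blast
    show "openin (Fn X n) {A \<in> topspace (Fn X n). SFq X A \<in> S \<inter> T}"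
      unfolding eq using S T by (intro openin_Int) blast+
  qed
next
  fix K assume K: "\<forall>W\<in>K. W \<subseteq> SFq X ` topspace (Fn X n) \<and>
      openin (Fn X n) {A \<in> topspace (Fn X n). SFq X A \<in> W}"
  have eq: "{A \<in> topspace (Fn X n). SFq X A \<in> \<Union>K} =
      \<Union>((\<lambda>W. {A \<in> topspace (Fn X n). SFq X A \<in> W}) ` K)" by blast
  show "\<Union>K \<subseteq> SFq X ` topspace (Fn X n) \<and>
     openin (Fn X n) {A \<in> topspace (Fn X n). SFq X A \<in> \<Union>K}"
  proof
    show "\<Union>K \<subseteq> SFq X ` topspace (Fn X n)" using K by blast
    show "openin (Fn X n) {A \<in> topspace (Fn X n). SFq X A \<in> \<Union>K}"
      unfolding eq using K by (intro openin_Union) blast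
  qed
qed

end

theory Submission
  imports Defs
begin

definition Sb :: "'a topology \<Rightarrow> nat \<Rightarrow> 'a set set set" where
  "Sb X n = ({{A \<in> Fn_set X n. A \<subseteq> U} | U. openin X U} \<union>
      {{A \<in> Fn_set X n. A \<inter> U \<noteq> {}} | U. openin X U})"

lemma Fn_eq: "Fn X n = topology_generated_by (Sb X n)"
  unfolding Fn_def Sb_def by simp

lemma topspace_Fn: "topspace (Fn X n) = Fn_set X n"
proof -
  have "Fn_set X n \<in> Sb X n"
    unfolding Sb_def by (auto intro!: exI[of _ "topspace X"] simp: Fn_set_def)
  moreover have "\<Union>(Sb X n) \<subseteq> Fn_set X n" unfolding Sb_def by auto
  ultimately show ?thesis unfolding Fn_eq by auto
qed

lemma openin_Fn: "openin (Fn X n) U \<longleftrightarrow> generate_topology_on (Sb X n) U"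
  unfolding Fn_eq openin_topology_generated_by_iff ..

lemma open_sub: "openin X U \<Longrightarrow> openin (Fn X n) {A \<in> Fn_set X n. A \<subseteq> U}"
  unfolding Fn_eq by (rule topology_generated_by_Basis) (auto simp: Sb_def)

lemma open_meet: "openin X U \<Longrightarrow> openin (Fn X n) {A \<in> Fn_set X n. A \<inter> U \<noteq> {}}"
  unfolding Fn_eq by (rule topology_generated_by_Basis) (auto simp: Sb_def)

lemma Fn_map_pow: "(Fn_map f ^^ k) A = (f ^^ k) ` A"
  by (induction k) (auto simp: Fn_map_def image_comp)

lemma Fn_map_in:
  assumes "f ` topspace X \<subseteq> topspace X" "A \<in> Fn_set X n"
  shows "Fn_map f A \<in> Fn_set X n"
  using assms card_image_le[of A f] unfolding Fn_set_def Fn_map_def by auto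

lemma Fn_map_pow_in:
  assumes "f ` topspace X \<subseteq> topspace X" "A \<in> Fn_set X n"
  shows "(Fn_map f ^^ k) A \<in> Fn_set X n"
  by (induction k) (use assms Fn_map_in in auto)

lemma pair_in:
  assumes "x \<in> topspace X" "y \<in> topspace X" "n \<ge> 2"
  shows "{x, y} \<in> Fn_set X n"
proof -
  have "card {x, y} \<le> 2" by (simp add: card_insert_if)
  then show ?thesis using assms unfolding Fn_set_def by auto
qed

lemma single_in:
  assumes "x \<in> topspace X" "n \<ge> 2"
  shows "{x} \<in> Fn_set X n"
  using assms unfolding Fn_set_def by auto

lemma nbhd_lemma:
  assumes gen: "generate_topology_on (Sb X n) U" and n: "n \<ge> 2"
  shows "\<forall>x\<in>topspace X. {x} \<in> U \<longrightarrow> (\<exists>N. openin X N \<and> x \<in> N \<and> (\<forall>y\<in>N. {x, y} \<in> U))"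
  using gen
proof (induction rule: generate_topology_on.induct)
  case Empty
  then show ?case by simp
next
  case (Int a b)
  show ?case
  proof (intro ballI impI)
    fix x assume x: "x \<in> topspace X" "{x} \<in> a \<inter> b"
    obtain N1 where N1: "openin X N1" "x \<in> N1" "\<forall>y\<in>N1. {x, y} \<in> a" using Int.IH(1) x by blast
    obtain N2 where N2: "openin X N2" "x \<in> N2" "\<forall>y\<in>N2. {x, y} \<in> b" using Int.IH(2) x by blast
    show "\<exists>N. openin X N \<and> x \<in> N \<and> (\<forall>y\<in>N. {x, y} \<in> a \<inter> b)"
      by (rule exI[of _ "N1 \<inter> N2"]) (use N1 N2 in auto)
  qed
next
  case (UN K)
  show ?case
  proof (intro ballI impI)
    fix x assume x: "x \<in> topspace X" "{x} \<in> \<Union>K"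
    then obtain k where k: "k \<in> K" "{x} \<in> k" by blast
    obtain N where N: "openin X N" "x \<in> N" "\<forall>y\<in>N. {x, y} \<in> k" using UN.IH[OF k(1)] x k by blast
    show "\<exists>N. openin X N \<and> x \<in> N \<and> (\<forall>y\<in>N. {x, y} \<in> \<Union>K)"
      using N k by blast
  qed
next
  case (Basis s)
  show ?case
  proof (intro ballI impI)
    fix x assume x: "x \<in> topspace X" "{x} \<in> s"
    from Basis consider (a) V where "openin X V" "s = {A \<in> Fn_set X n. A \<subseteq> V}"
      | (b) V where "openin X V" "s = {A \<in> Fn_set X n. A \<inter> V \<noteq> {}}"
      unfolding Sb_def by blast
    then show "\<exists>N. openin X N \<and> x \<in> N \<and> (\<forall>y\<in>N. {x, y} \<in> s)"
    proof cases
      case a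
      then show ?thesis using x pair_in[OF _ _ n, of x X] openin_subset[OF a(1)]
        by (intro exI[of _ V]) auto
    next
      case b
      then show ?thesis using x pair_in[OF _ _ n, of x X]
        by (intro exI[of _ "topspace X"]) auto
    qed
  qed
qed

lemma F1_not_single:
  assumes "compactum X"
  shows "F1_set X \<noteq> {B}"
proof -
  obtain x y where "x \<in> topspace X" "y \<in> topspace X" "x \<noteq> y"
    using assms unfolding compactum_def by blast
  then have "{x} \<in> F1_set X" "{y} \<in> F1_set X" "{x} \<noteq> {y}" unfolding F1_set_def by auto
  then show ?thesis by auto
qed

lemma nonsingleton_in_open:
  assumes X: "compactum X" and n: "n \<ge> 2" and U: "openin (Fn X n) U" "U \<noteq> {}"
  shows "U - F1_set X \<noteq> {}"
proof -
  obtain A where A: "A \<in> U" using U by blast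
  show ?thesis
  proof (cases "A \<in> F1_set X")
    case False
    then show ?thesis using A by blast
  next
    case True
    then obtain x where x: "A = {x}" "x \<in> topspace X" unfolding F1_set_def by blast
    obtain N where N: "openin X N" "x \<in> N" "\<forall>y\<in>N. {x, y} \<in> U"
      using nbhd_lemma[OF U(1)[unfolded openin_Fn] n] x A by blast
    have "N \<noteq> {x}" using N(1) x(2) X unfolding compactum_def by blast
    then obtain y where y: "y \<in> N" "y \<noteq> x" using N(2) by blast
    then have "{x, y} \<in> U" using N by blast
    moreover have "{x, y} \<notin> F1_set X" using y unfolding F1_set_def by (auto simp: doubleton_eq_iff)
    ultimately show ?thesis by blast
  qed
qed

lemma open_nonsingletons:
  assumes X: "compactum X"
  shows "openin (Fn X n) (Fn_set X n - F1_set X)"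
proof (subst openin_subopen, intro ballI)
  fix A assume A: "A \<in> Fn_set X n - F1_set X"
  then have Afin: "A \<subseteq> topspace X" "A \<noteq> {}" unfolding Fn_set_def by auto
  then obtain a where a: "a \<in> A" by blast
  have "\<exists>b\<in>A. b \<noteq> a"
  proof (rule ccontr)
    assume "\<not> ?thesis"
    then have "A = {a}" using a by blast
    then show False using A Afin a unfolding F1_set_def by auto
  qed
  then obtain b where b: "b \<in> A" "b \<noteq> a" by blast
  have H: "Hausdorff_space X" using X unfolding compactum_def by blast
  obtain Ua Ub where UU: "openin X Ua" "openin X Ub" "a \<in> Ua" "b \<in> Ub" "disjnt Ua Ub"
    using H a b Afin unfolding Hausdorff_space_def by (metis subsetD)
  let ?N = "{B \<in> Fn_set X n. B \<inter> Ua \<noteq> {}} \<inter> {B \<in> Fn_set X n. B \<inter> Ub \<noteq> {}}"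
  have "openin (Fn X n) ?N" using open_meet UU by (intro openin_Int) auto
  moreover have "A \<in> ?N" using A a b UU by auto
  moreover have "?N \<subseteq> Fn_set X n - F1_set X"
    using UU(5) unfolding F1_set_def disjnt_def by auto
  ultimately show "\<exists>T. openin (Fn X n) T \<and> A \<in> T \<and> T \<subseteq> Fn_set X n - F1_set X" by blast
qed

lemma openin_SFn:
  "openin (SFn X n) W \<longleftrightarrow> W \<subseteq> SFq X ` topspace (Fn X n) \<and>
      openin (Fn X n) {A \<in> topspace (Fn X n). SFq X A \<in> W}"
  unfolding SFn_def topology_inverse'[OF istopology_SFn] ..

lemma topspace_SFn: "topspace (SFn X n) = SFq X ` topspace (Fn X n)"
proof
  show "topspace (SFn X n) \<subseteq> SFq X ` topspace (Fn X n)"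
    using openin_topspace[of "SFn X n"] unfolding openin_SFn by (rule conjunct1)
  have e: "{A \<in> topspace (Fn X n). SFq X A \<in> SFq X ` topspace (Fn X n)} = topspace (Fn X n)"
    by blast
  have "openin (SFn X n) (SFq X ` topspace (Fn X n))"
    unfolding openin_SFn e by simp
  then show "SFq X ` topspace (Fn X n) \<subseteq> topspace (SFn X n)"
    by (rule openin_subset)
qed

lemma SF_comm:
  assumes X: "compactum X" and f: "f ` topspace X \<subseteq> topspace X" and A: "A \<in> Fn_set X n"
  shows "SFn_map X f (SFq X A) = SFq X (Fn_map f A)"
proof (cases "A \<in> F1_set X")
  case True
  then obtain x where x: "A = {x}" "x \<in> topspace X" unfolding F1_set_def by blast
  then have "Fn_map f A \<in> F1_set X" using f unfolding Fn_map_def F1_set_def by auto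
  then have "SFq X (Fn_map f A) = F1_set X" unfolding SFq_def by simp
  moreover have "SFq X A = F1_set X" using True unfolding SFq_def by simp
  ultimately show ?thesis unfolding SFn_map_def by simp
next
  case False
  then have "SFq X A = {A}" unfolding SFq_def by simp
  moreover have "{A} \<noteq> F1_set X" using F1_not_single[OF X] by metis
  ultimately show ?thesis unfolding SFn_map_def by simp
qed

lemma SF_comm_pow:
  assumes X: "compactum X" and f: "f ` topspace X \<subseteq> topspace X" and A: "A \<in> Fn_set X n"
  shows "(SFn_map X f ^^ k) (SFq X A) = SFq X ((Fn_map f ^^ k) A)"
proof (induction k)
  case 0
  then show ?case by simp
next
  case (Suc k)
  then show ?case using SF_comm[OF X f Fn_map_pow_in[OF f A, of k]] by simp
qed

lemma part_2_1:
  assumes n: "n \<ge> 2" and T: "TTpp (Fn X n) (Fn_map f)"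
  shows "TTpp X f"
  unfolding TTpp_def
proof (intro allI impI)
  fix U V assume U: "openin X U" and V: "openin X V" and "U \<noteq> {}" "V \<noteq> {}"
  then obtain u v where uv: "u \<in> U" "v \<in> V" by blast
  let ?U = "{A \<in> Fn_set X n. A \<subseteq> U}" and ?V = "{A \<in> Fn_set X n. A \<subseteq> V}"
  have "{u} \<in> Fn_set X n" by (rule single_in[OF _ n]) (use uv openin_subset[OF U] in blast)
  moreover have "{v} \<in> Fn_set X n" by (rule single_in[OF _ n]) (use uv openin_subset[OF V] in blast)
  ultimately have "{u} \<in> ?U" "{v} \<in> ?V" using uv by auto
  then have inf: "infinite {k. ?U \<inter> {x \<in> topspace (Fn X n). (Fn_map f ^^ k) x \<in> ?V} \<noteq> {}}"
    using T open_sub[OF U] open_sub[OF V] unfolding TTpp_def by blast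
  show "infinite {k. U \<inter> {x \<in> topspace X. (f ^^ k) x \<in> V} \<noteq> {}}"
  proof (rule infinite_super[OF _ inf], rule subsetI)
    fix k assume "k \<in> {k. ?U \<inter> {x \<in> topspace (Fn X n). (Fn_map f ^^ k) x \<in> ?V} \<noteq> {}}"
    then have "?U \<inter> {x \<in> topspace (Fn X n). (Fn_map f ^^ k) x \<in> ?V} \<noteq> {}" by (rule CollectD)
    then obtain A where A: "A \<in> Fn_set X n" "A \<subseteq> U" "(Fn_map f ^^ k) A \<subseteq> V" by blast
    obtain a where a: "a \<in> A" using A(1) unfolding Fn_set_def by blast
    have "(f ^^ k) a \<in> V" using A(3) a unfolding Fn_map_pow by blast
    then have "a \<in> U \<inter> {x \<in> topspace X. (f ^^ k) x \<in> V}" using a A(2) openin_subset[OF U] by blast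
    then have "U \<inter> {x \<in> topspace X. (f ^^ k) x \<in> V} \<noteq> {}" by blast
    then show "k \<in> {k. U \<inter> {x \<in> topspace X. (f ^^ k) x \<in> V} \<noteq> {}}" by (rule CollectI)
  qed
qed

lemma part_2_3:
  assumes X: "compactum X" and f: "f ` topspace X \<subseteq> topspace X"
    and T: "TTpp (Fn X n) (Fn_map f)"
  shows "TTpp (SFn X n) (SFn_map X f)"
  unfolding TTpp_def
proof (intro allI impI)
  fix W1 W2 assume W1: "openin (SFn X n) W1" and W2: "openin (SFn X n) W2"
    and ne: "W1 \<noteq> {}" "W2 \<noteq> {}"
  let ?U1 = "{A \<in> topspace (Fn X n). SFq X A \<in> W1}"
  let ?U2 = "{A \<in> topspace (Fn X n). SFq X A \<in> W2}"
  have o: "openin (Fn X n) ?U1" "openin (Fn X n) ?U2"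
    by (rule conjunct2[OF W1[unfolded openin_SFn]]) (rule conjunct2[OF W2[unfolded openin_SFn]])
  have ss: "W1 \<subseteq> SFq X ` topspace (Fn X n)" "W2 \<subseteq> SFq X ` topspace (Fn X n)"
    by (rule conjunct1[OF W1[unfolded openin_SFn]]) (rule conjunct1[OF W2[unfolded openin_SFn]])
  have "?U1 \<noteq> {}"
  proof -
    obtain c where c: "c \<in> W1" using ne by blast
    then obtain A where "A \<in> topspace (Fn X n)" "c = SFq X A" using ss by blast
    then show ?thesis using c by blast
  qed
  moreover have "?U2 \<noteq> {}"
  proof -
    obtain c where c: "c \<in> W2" using ne by blast
    then obtain A where "A \<in> topspace (Fn X n)" "c = SFq X A" using ss by blast
    then show ?thesis using c by blast
  qed
  ultimately have inf: "infinite {k. ?U1 \<inter> {x \<in> topspace (Fn X n). (Fn_map f ^^ k) x \<in> ?U2} \<noteq> {}}"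
    using T o unfolding TTpp_def by blast
  show "infinite {k. W1 \<inter> {x \<in> topspace (SFn X n). (SFn_map X f ^^ k) x \<in> W2} \<noteq> {}}"
  proof (rule infinite_super[OF _ inf], rule subsetI)
    fix k assume "k \<in> {k. ?U1 \<inter> {x \<in> topspace (Fn X n). (Fn_map f ^^ k) x \<in> ?U2} \<noteq> {}}"
    then have "?U1 \<inter> {x \<in> topspace (Fn X n). (Fn_map f ^^ k) x \<in> ?U2} \<noteq> {}" by (rule CollectD)
    then obtain A where A: "A \<in> topspace (Fn X n)" "SFq X A \<in> W1"
      "SFq X ((Fn_map f ^^ k) A) \<in> W2" by blast
    have AF: "A \<in> Fn_set X n" using A(1) unfolding topspace_Fn .
    have "(SFn_map X f ^^ k) (SFq X A) \<in> W2"
      unfolding SF_comm_pow[OF X f AF] by (rule A(3))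
    moreover have "SFq X A \<in> topspace (SFn X n)" unfolding topspace_SFn using A(1) by (rule imageI)
    ultimately have "SFq X A \<in> W1 \<inter> {x \<in> topspace (SFn X n). (SFn_map X f ^^ k) x \<in> W2}"
      using A by blast
    then have "W1 \<inter> {x \<in> topspace (SFn X n). (SFn_map X f ^^ k) x \<in> W2} \<noteq> {}" by blast
    then show "k \<in> {k. W1 \<inter> {x \<in> topspace (SFn X n). (SFn_map X f ^^ k) x \<in> W2} \<noteq> {}}" by (rule CollectI)
  qed
qed

lemma openin_SFn':
  "openin (SFn X n) W \<longleftrightarrow> W \<subseteq> SFq X ` Fn_set X n \<and>
      openin (Fn X n) {A \<in> Fn_set X n. SFq X A \<in> W}"
  by (simp only: openin_SFn topspace_Fn)

lemma pre_lemma: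
  assumes X: "compactum X" and U': "U' \<subseteq> Fn_set X n - F1_set X"
  shows "{A \<in> Fn_set X n. SFq X A \<in> SFq X ` U'} = U'"
proof -
  have q: "SFq X A = {A}" if "A \<notin> F1_set X" for A using that unfolding SFq_def by simp
  have nb: "F1_set X \<noteq> {B}" for B using F1_not_single[OF X] .
  show ?thesis
  proof (rule set_eqI, rule iffI)
    fix A assume "A \<in> {A \<in> Fn_set X n. SFq X A \<in> SFq X ` U'}"
    then obtain B where B: "B \<in> U'" "SFq X A = SFq X B" by blast
    have "B \<notin> F1_set X" using B(1) U' by blast
    then have qB: "SFq X B = {B}" by (rule q)
    show "A \<in> U'"
    proof (cases "A \<in> F1_set X")
      case True
      then have "SFq X A = F1_set X" unfolding SFq_def by simp
      then show ?thesis using B(2) qB nb by metis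
    next
      case False
      then have "{A} = {B}" using B(2) qB q by metis
      then show ?thesis using B(1) by simp
    qed
  next
    fix A assume A: "A \<in> U'"
    then have "A \<in> Fn_set X n" using U' by blast
    moreover have "SFq X A \<in> SFq X ` U'" using A by (rule imageI)
    ultimately show "A \<in> {A \<in> Fn_set X n. SFq X A \<in> SFq X ` U'}" by blast
  qed
qed

lemma W_lemma:
  assumes X: "compactum X" and o: "openin (Fn X n) U'" and U': "U' \<subseteq> Fn_set X n - F1_set X"
  shows "openin (SFn X n) (SFq X ` U')"
proof -
  have "U' \<subseteq> Fn_set X n" using U' by blast
  then have "SFq X ` U' \<subseteq> SFq X ` Fn_set X n" by (rule image_mono)
  then show ?thesis unfolding openin_SFn' pre_lemma[OF X U'] using o by (rule conjI)
qed

lemma part_3_2: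
  assumes X: "compactum X" and n: "n \<ge> 2" and f: "f ` topspace X \<subseteq> topspace X"
    and T: "TTpp (SFn X n) (SFn_map X f)"
  shows "TTpp (Fn X n) (Fn_map f)"
  unfolding TTpp_def topspace_Fn
proof (intro allI impI)
  fix U1 U2 assume U1: "openin (Fn X n) U1" and U2: "openin (Fn X n) U2"
    and ne: "U1 \<noteq> {}" "U2 \<noteq> {}"
  define U1' where "U1' = U1 \<inter> (Fn_set X n - F1_set X)"
  define U2' where "U2' = U2 \<inter> (Fn_set X n - F1_set X)"
  have sub: "U1 \<subseteq> Fn_set X n" "U2 \<subseteq> Fn_set X n"
    using openin_subset[OF U1] openin_subset[OF U2] unfolding topspace_Fn .
  have o': "openin (Fn X n) U1'" "openin (Fn X n) U2'"
    unfolding U1'_def U2'_def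
    by (rule openin_Int[OF U1 open_nonsingletons[OF X]]) (rule openin_Int[OF U2 open_nonsingletons[OF X]])
  have e: "U1' = U1 - F1_set X" "U2' = U2 - F1_set X" using sub unfolding U1'_def U2'_def by blast+
  have ne': "U1' \<noteq> {}" "U2' \<noteq> {}"
    unfolding e by (rule nonsingleton_in_open[OF X n U1 ne(1)]) (rule nonsingleton_in_open[OF X n U2 ne(2)])
  have U's: "U1' \<subseteq> Fn_set X n - F1_set X" "U2' \<subseteq> Fn_set X n - F1_set X"
    unfolding U1'_def U2'_def by blast+
  have W1: "openin (SFn X n) (SFq X ` U1')" by (rule W_lemma[OF X o'(1) U's(1)])
  have W2: "openin (SFn X n) (SFq X ` U2')" by (rule W_lemma[OF X o'(2) U's(2)])
  have n1: "SFq X ` U1' \<noteq> {}" using ne'(1) by simp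
  have n2: "SFq X ` U2' \<noteq> {}" using ne'(2) by simp
  have inf: "infinite {k. SFq X ` U1' \<inter> {x \<in> topspace (SFn X n). (SFn_map X f ^^ k) x \<in> SFq X ` U2'} \<noteq> {}}"
    using T[unfolded TTpp_def, rule_format, OF W1 W2 n1 n2] .
  show "infinite {k. U1 \<inter> {x \<in> Fn_set X n. (Fn_map f ^^ k) x \<in> U2} \<noteq> {}}"
  proof (rule infinite_super[OF _ inf], rule subsetI)
    fix k assume "k \<in> {k. SFq X ` U1' \<inter> {x \<in> topspace (SFn X n). (SFn_map X f ^^ k) x \<in> SFq X ` U2'} \<noteq> {}}"
    then have "SFq X ` U1' \<inter> {x \<in> topspace (SFn X n). (SFn_map X f ^^ k) x \<in> SFq X ` U2'} \<noteq> {}" by (rule CollectD)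
    then obtain A where A: "A \<in> U1'" "(SFn_map X f ^^ k) (SFq X A) \<in> SFq X ` U2'" by blast
    have AT: "A \<in> Fn_set X n" using A(1) U's(1) by blast
    have "SFq X ((Fn_map f ^^ k) A) \<in> SFq X ` U2'"
      using A(2) unfolding SF_comm_pow[OF X f AT] .
    moreover have "(Fn_map f ^^ k) A \<in> Fn_set X n"
      by (rule Fn_map_pow_in[OF f AT])
    ultimately have "(Fn_map f ^^ k) A \<in> {A \<in> Fn_set X n. SFq X A \<in> SFq X ` U2'}" by blast
    then have "(Fn_map f ^^ k) A \<in> U2'" unfolding pre_lemma[OF X U's(2)] .
    then have "A \<in> U1 \<inter> {x \<in> Fn_set X n. (Fn_map f ^^ k) x \<in> U2}"
      using A(1) AT unfolding U1'_def U2'_def by blast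
    then have "U1 \<inter> {x \<in> Fn_set X n. (Fn_map f ^^ k) x \<in> U2} \<noteq> {}" by blast
    then show "k \<in> {k. U1 \<inter> {x \<in> Fn_set X n. (Fn_map f ^^ k) x \<in> U2} \<noteq> {}}" by (rule CollectI)
  qed
qed

lemma general_part:
  "\<forall>(X :: 'a topology) (n::nat) f.
            compactum X \<longrightarrow> n \<ge> 2 \<longrightarrow> f ` topspace X \<subseteq> topspace X \<longrightarrow>
              (TTpp (Fn X n) (Fn_map f) \<longleftrightarrow> TTpp (SFn X n) (SFn_map X f)) \<and>
              (TTpp (Fn X n) (Fn_map f) \<longrightarrow> TTpp X f)"
proof (intro allI impI conjI iffI)
  fix X :: "'a topology" and n :: nat and f :: "'a \<Rightarrow> 'a"
  assume X: "compactum X" and n: "n \<ge> 2" and f: "f ` topspace X \<subseteq> topspace X"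
  show "TTpp (SFn X n) (SFn_map X f)" if "TTpp (Fn X n) (Fn_map f)"
    by (rule part_2_3[OF X f that])
  show "TTpp (Fn X n) (Fn_map f)" if "TTpp (SFn X n) (SFn_map X f)"
    by (rule part_3_2[OF X n f that])
  show "TTpp X f" if "TTpp (Fn X n) (Fn_map f)"
    by (rule part_2_1[OF n that])
qed

definition rot :: "real \<Rightarrow> real \<Rightarrow> real" where "rot \<theta> x = frac (x + \<theta>)"

lemma rot_pow_int: "(rot \<theta> ^^ k) x - x - real k * \<theta> \<in> \<int>"
proof (induction k)
  case 0
  then show ?case by simp
next
  case (Suc k)
  have "(rot \<theta> ^^ Suc k) x - x - real (Suc k) * \<theta> =
        ((rot \<theta> ^^ k) x - x - real k * \<theta>) - of_int \<lfloor>(rot \<theta> ^^ k) x + \<theta>\<rfloor>"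
    by (simp add: rot_def frac_def algebra_simps)
  also have "\<dots> \<in> \<int>" by (rule Ints_diff[OF Suc Ints_of_int])
  finally show ?case .
qed

lemma rot_range: "x \<in> {0..1} \<Longrightarrow> (rot \<theta> ^^ k) x \<in> {0..1}"
proof (induction k)
  case 0
  then show ?case by simp
next
  case (Suc k)
  then show ?case by (simp add: rot_def frac_ge_0 less_imp_le[OF frac_lt_1])
qed

lemma dens:
  assumes "\<theta> \<notin> \<rat>" "\<epsilon> > 0"
  shows "\<exists>k>N. \<exists>h::int. \<bar>real k * \<theta> - of_int h - c\<bar> < \<epsilon>"
proof -
  have irr: "real (Suc N) * \<theta> \<notin> \<rat>"
  proof
    assume "real (Suc N) * \<theta> \<in> \<rat>"
    then have "real (Suc N) * \<theta> / real (Suc N) \<in> \<rat>" by (intro Rats_divide) auto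
    then show False using assms(1) by simp
  qed
  obtain h k where hk: "k > 0" "\<bar>of_int k * (real (Suc N) * \<theta>) - of_int h - c\<bar> < \<epsilon>"
    using sequence_of_fractional_parts_is_dense[OF irr assms(2)] by metis
  define k' where "k' = nat k * Suc N"
  have k1: "1 \<le> nat k" using hk(1) by simp
  have "1 * Suc N \<le> nat k * Suc N" by (rule mult_le_mono1[OF k1])
  then have "k' > N" unfolding k'_def by simp
  moreover have rk: "real k' = of_int k * real (Suc N)" unfolding k'_def using hk(1) by (simp add: algebra_simps)
  have eq: "real k' * \<theta> = of_int k * (real (Suc N) * \<theta>)" unfolding rk by (simp only: mult.assoc)
  have "\<bar>real k' * \<theta> - of_int h - c\<bar> < \<epsilon>" unfolding eq by (rule hk(2))
  ultimately show ?thesis by blast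
qed

lemma interval_in_open:
  assumes U: "openin (top_of_set {0..1::real}) U" and u: "u \<in> U"
  shows "\<exists>a d. 0 < d \<and> 0 \<le> a \<and> a + d \<le> 1 \<and> {a<..<a+d} \<subseteq> U"
proof -
  obtain T where T: "open T" "U = T \<inter> {0..1}" using U by (auto simp: openin_open)
  have u01: "u \<in> {0..1}" "u \<in> T" using u T by auto
  obtain e where e: "e > 0" "ball u e \<subseteq> T" using T(1) u01(2) open_contains_ball by blast
  define d where "d = min e (1/2)"
  have d: "d > 0" "d \<le> e" "d \<le> 1/2" using e unfolding d_def by auto
  show ?thesis
  proof (cases "u \<le> 1/2")
    case True
    have "{u<..<u+d} \<subseteq> U"
    proof
      fix y assume "y \<in> {u<..<u+d}"
      then have "y \<in> ball u e" "y \<in> {0..1}" using d u01 True by (auto simp: dist_real_def)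
      then show "y \<in> U" using e T by auto
    qed
    then show ?thesis using d u01 True by (intro exI[of _ u] exI[of _ d]) auto
  next
    case False
    have "{u-d<..<u-d+d} \<subseteq> U"
    proof
      fix y assume "y \<in> {u-d<..<u-d+d}"
      then have "y \<in> ball u e" "y \<in> {0..1}" using d u01 False by (auto simp: dist_real_def)
      then show "y \<in> U" using e T by auto
    qed
    then show ?thesis using d u01 False by (intro exI[of _ "u-d"] exI[of _ d]) auto
  qed
qed

lemma perfect01:
  assumes U: "openin (top_of_set {0..1::real}) U" and u: "u \<in> U"
  shows "\<exists>y\<in>U. y \<noteq> u"
proof -
  obtain a d where ad: "0 < d" "0 \<le> a" "a + d \<le> 1" "{a<..<a+d} \<subseteq> U"
    using interval_in_open[OF U u] by blast
  have "a + d/3 \<in> U" "a + 2*d/3 \<in> U" using ad by auto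
  moreover have "a + d/3 \<noteq> a + 2*d/3" using ad by simp
  ultimately show ?thesis by metis
qed


lemma TT_rot:
  assumes irr: "\<theta> \<notin> \<rat>"
  shows "TTpp (top_of_set {0..1}) (rot \<theta>)"
  unfolding TTpp_def
proof (intro allI impI)
  fix U V :: "real set" assume U: "openin (top_of_set {0..1}) U" and V: "openin (top_of_set {0..1}) V"
    and ne: "U \<noteq> {}" "V \<noteq> {}"
  obtain u v where uv: "u \<in> U" "v \<in> V" using ne by blast
  obtain a d where ad: "0 < d" "0 \<le> a" "a + d \<le> 1" "{a<..<a+d} \<subseteq> U"
    using interval_in_open[OF U uv(1)] by blast
  obtain b d' where bd: "0 < d'" "0 \<le> b" "b + d' \<le> 1" "{b<..<b+d'} \<subseteq> V"
    using interval_in_open[OF V uv(2)] by blast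
  define \<delta> where "\<delta> = min d d'"
  have \<delta>: "\<delta> > 0" "\<delta> \<le> d" "\<delta> \<le> d'" using ad bd unfolding \<delta>_def by auto
  show "infinite {k. U \<inter> {x \<in> topspace (top_of_set {0..1}). (rot \<theta> ^^ k) x \<in> V} \<noteq> {}}"
    unfolding infinite_nat_iff_unbounded
  proof
    fix N
    obtain k h where kh: "k > N" "\<bar>real k * \<theta> - of_int h - (b - a)\<bar> < \<delta>/4"
      using dens[OF irr, of "\<delta>/4" N "b - a"] \<delta> by auto
    define x where "x = a + \<delta>/2"
    have xU: "x \<in> U" using ad \<delta> unfolding x_def by auto
    have x01: "x \<in> {0..1}" using ad \<delta> unfolding x_def by auto
    define y where "y = x + real k * \<theta> - of_int h"
    have y: "b < y" "y < b + d'" using kh(2) \<delta> unfolding y_def x_def abs_less_iff by linarith+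
    have fk01: "(rot \<theta> ^^ k) x \<in> {0..1}" using rot_range[OF x01] .
    have "(rot \<theta> ^^ k) x - y \<in> \<int>"
    proof -
      have "(rot \<theta> ^^ k) x - y = ((rot \<theta> ^^ k) x - x - real k * \<theta>) + of_int h"
        unfolding y_def by simp
      also have "\<dots> \<in> \<int>" by (rule Ints_add[OF rot_pow_int Ints_of_int])
      finally show ?thesis .
    qed
    moreover have "\<bar>(rot \<theta> ^^ k) x - y\<bar> < 1" using fk01 y bd by auto
    ultimately have "(rot \<theta> ^^ k) x - y = 0" by (rule Ints_nonzero_abs_less1)
    then have "(rot \<theta> ^^ k) x = y" by simp
    then have "(rot \<theta> ^^ k) x \<in> V" using y bd by auto
    then have "x \<in> U \<inter> {x \<in> topspace (top_of_set {0..1}). (rot \<theta> ^^ k) x \<in> V}"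
      using xU x01 by simp
    then show "\<exists>k>N. k \<in> {k. U \<inter> {x \<in> topspace (top_of_set {0..1}). (rot \<theta> ^^ k) x \<in> V} \<noteq> {}}"
      using kh(1) by blast
  qed
qed

definition Xc :: "real set topology" where
  "Xc = pullback_topology ((\<lambda>x. {x}) ` {0..1}) the_elem (top_of_set {0..1})"

lemma topspace_Xc: "topspace Xc = (\<lambda>x. {x}) ` {0..1::real}"
  unfolding Xc_def topspace_pullback_topology by auto

lemma preim_eq: "U \<subseteq> {0..1::real} \<Longrightarrow> the_elem -` U \<inter> (\<lambda>x. {x}) ` {0..1} = (\<lambda>x. {x}) ` U"
  by auto

lemma openin_Xc: "openin Xc W \<longleftrightarrow> (\<exists>U. openin (top_of_set {0..1::real}) U \<and> W = (\<lambda>x. {x}) ` U)"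
proof -
  have "openin Xc W \<longleftrightarrow> (\<exists>U. openin (top_of_set {0..1::real}) U \<and> W = the_elem -` U \<inter> (\<lambda>x. {x}) ` {0..1})"
    unfolding Xc_def openin_pullback_topology ..
  also have "\<dots> \<longleftrightarrow> (\<exists>U. openin (top_of_set {0..1::real}) U \<and> W = (\<lambda>x. {x}) ` U)"
  proof -
    have eq: "the_elem -` U \<inter> (\<lambda>x. {x}) ` {0..1} = (\<lambda>x. {x}) ` U"
      if "openin (top_of_set {0..1::real}) U" for U
      using openin_subset[OF that] by (intro preim_eq) simp
    show ?thesis
    proof
      assume "\<exists>U. openin (top_of_set {0..1::real}) U \<and> W = the_elem -` U \<inter> (\<lambda>x. {x}) ` {0..1}"
      then obtain U where "openin (top_of_set {0..1::real}) U" "W = the_elem -` U \<inter> (\<lambda>x. {x}) ` {0..1}"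
        by blast
      then show "\<exists>U. openin (top_of_set {0..1::real}) U \<and> W = (\<lambda>x. {x}) ` U"
        by (intro exI[of _ U]) (simp add: eq)
    next
      assume "\<exists>U. openin (top_of_set {0..1::real}) U \<and> W = (\<lambda>x. {x}) ` U"
      then obtain U where "openin (top_of_set {0..1::real}) U" "W = (\<lambda>x. {x}) ` U"
        by blast
      then show "\<exists>U. openin (top_of_set {0..1::real}) U \<and> W = the_elem -` U \<inter> (\<lambda>x. {x}) ` {0..1}"
        by (intro exI[of _ U]) (simp add: eq)
    qed
  qed
  finally show ?thesis .
qed

lemma compact_Xc: "compact_space Xc"
proof -
  have c: "continuous_map (top_of_set {0..1::real}) Xc (\<lambda>x. {x})"
    unfolding Xc_def
  proof (rule continuous_map_pullback')
    have "(the_elem \<circ> (\<lambda>x. {x})) = (id :: real \<Rightarrow> real)" by (auto simp: fun_eq_iff)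
    then show "continuous_map (top_of_set {0..1::real}) (top_of_set {0..1}) (the_elem \<circ> (\<lambda>x. {x}))"
      by simp
    show "topspace (top_of_set {0..1::real}) \<subseteq> (\<lambda>x. {x}) -` (\<lambda>x. {x}) ` {0..1}" by auto
  qed
  have "compactin (top_of_set {0..1::real}) {0..1}"
    unfolding compactin_subtopology by simp
  from image_compactin[OF this c] show ?thesis
    unfolding compact_space_def topspace_Xc .
qed

lemma Hausdorff_Xc: "Hausdorff_space Xc"
  unfolding Hausdorff_space_def
proof (intro allI impI, elim conjE)
  fix p q assume pq: "p \<in> topspace Xc" "q \<in> topspace Xc" "p \<noteq> q"
  obtain x where x: "p = {x}" "x \<in> {0..1}" using pq(1) unfolding topspace_Xc by auto
  obtain y where y: "q = {y}" "y \<in> {0..1}" using pq(2) unfolding topspace_Xc by auto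
  have "x \<noteq> y" using pq(3) x y by auto
  note xy = x(1) y(1) x(2) y(2) this
  have H: "Hausdorff_space (top_of_set {0..1::real})"
    by (rule Hausdorff_space_subtopology) simp
  obtain U V where UV: "openin (top_of_set {0..1::real}) U" "openin (top_of_set {0..1::real}) V"
    "x \<in> U" "y \<in> V" "disjnt U V"
    using H[unfolded Hausdorff_space_def, rule_format, of x y] xy by auto
  show "\<exists>U V. openin Xc U \<and> openin Xc V \<and> p \<in> U \<and> q \<in> V \<and> disjnt U V"
  proof (rule exI[of _ "(\<lambda>x. {x}) ` U"], rule exI[of _ "(\<lambda>x. {x}) ` V"], intro conjI)
    show "openin Xc ((\<lambda>x. {x}) ` U)" unfolding openin_Xc using UV(1) by blast
    show "openin Xc ((\<lambda>x. {x}) ` V)" unfolding openin_Xc using UV(2) by blast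
    show "p \<in> (\<lambda>x. {x}) ` U" "q \<in> (\<lambda>x. {x}) ` V" using xy UV by auto
    show "disjnt ((\<lambda>x. {x}) ` U) ((\<lambda>x. {x}) ` V)" using UV(5) unfolding disjnt_def by auto
  qed
qed

lemma compactum_Xc: "compactum Xc"
  unfolding compactum_def
proof (intro conjI compact_Xc Hausdorff_Xc ballI notI)
  fix p assume p: "p \<in> topspace Xc" and o: "openin Xc {p}"
  then obtain x where x: "p = {x}" "x \<in> {0..1::real}" unfolding topspace_Xc by auto
  obtain U where U: "openin (top_of_set {0..1::real}) U" "{p} = (\<lambda>x. {x}) ` U"
    using o unfolding openin_Xc by blast
  have "{x} \<in> (\<lambda>x. {x}) ` U" using U(2) x(1) by blast
  then have xU: "x \<in> U" by auto
  obtain y where y: "y \<in> U" "y \<noteq> x" using perfect01[OF U(1) xU] by blast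
  have "{y} \<in> {p}" using U(2) y(1) by blast
  then show False using x y by simp
next
  show "\<exists>x\<in>topspace Xc. \<exists>y\<in>topspace Xc. x \<noteq> y"
    unfolding topspace_Xc by (intro bexI[of _ "{0}"] bexI[of _ "{1}"]) auto
qed

definition Fc :: "real \<Rightarrow> real set \<Rightarrow> real set" where
  "Fc \<theta> p = {rot \<theta> (the_elem p)}"

lemma Fc_pow: "(Fc \<theta> ^^ k) {x} = {(rot \<theta> ^^ k) x}"
  by (induction k) (auto simp: Fc_def)

lemma Fc_maps: "Fc \<theta> ` topspace Xc \<subseteq> topspace Xc"
proof
  fix q assume "q \<in> Fc \<theta> ` topspace Xc"
  then obtain x where x: "x \<in> {0..1}" "q = Fc \<theta> {x}" unfolding topspace_Xc by auto
  have "(rot \<theta> ^^ 1) x \<in> {0..1}" by (rule rot_range[OF x(1)])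
  then show "q \<in> topspace Xc" using x unfolding topspace_Xc Fc_def by simp
qed

lemma TT_Fc:
  assumes irr: "\<theta> \<notin> \<rat>"
  shows "TTpp Xc (Fc \<theta>)"
  unfolding TTpp_def
proof (intro allI impI)
  fix W1 W2 assume W1: "openin Xc W1" and W2: "openin Xc W2" and ne: "W1 \<noteq> {}" "W2 \<noteq> {}"
  obtain U where U: "openin (top_of_set {0..1::real}) U" "W1 = (\<lambda>x. {x}) ` U"
    using W1 unfolding openin_Xc by blast
  obtain V where V: "openin (top_of_set {0..1::real}) V" "W2 = (\<lambda>x. {x}) ` V"
    using W2 unfolding openin_Xc by blast
  have neUV: "U \<noteq> {}" "V \<noteq> {}" using ne U V by auto
  have inf: "infinite {k. U \<inter> {x \<in> topspace (top_of_set {0..1}). (rot \<theta> ^^ k) x \<in> V} \<noteq> {}}"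
    using TT_rot[OF irr, unfolded TTpp_def, rule_format, OF U(1) V(1) neUV] .
  show "infinite {k. W1 \<inter> {x \<in> topspace Xc. (Fc \<theta> ^^ k) x \<in> W2} \<noteq> {}}"
  proof (rule infinite_super[OF _ inf], rule subsetI)
    fix k assume "k \<in> {k. U \<inter> {x \<in> topspace (top_of_set {0..1}). (rot \<theta> ^^ k) x \<in> V} \<noteq> {}}"
    then obtain x where x: "x \<in> U" "x \<in> {0..1}" "(rot \<theta> ^^ k) x \<in> V" by auto
    have "{x} \<in> W1 \<inter> {x \<in> topspace Xc. (Fc \<theta> ^^ k) x \<in> W2}"
      using x U(2) V(2) by (auto simp: topspace_Xc Fc_pow)
    then show "k \<in> {k. W1 \<inter> {x \<in> topspace Xc. (Fc \<theta> ^^ k) x \<in> W2} \<noteq> {}}" by blast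
  qed
qed

lemma not_TT_Fn:
  "\<not> TTpp (Fn Xc 2) (Fn_map (Fc \<theta>))"
proof
  assume T: "TTpp (Fn Xc 2) (Fn_map (Fc \<theta>))"
  define U1 where "U1 = {1/5<..<3/10::real}"
  define U2 where "U2 = {7/10<..<4/5::real}"
  define V where "V = {2/5<..<3/5::real}"
  have oY: "openin (top_of_set {0..1}) U1" "openin (top_of_set {0..1}) U2" "openin (top_of_set {0..1}) V"
    unfolding U1_def U2_def V_def by (auto intro!: open_subset)
  have oX1: "openin Xc ((\<lambda>x. {x}) ` U1)" unfolding openin_Xc by (rule exI, rule conjI[OF oY(1) refl])
  have oX2: "openin Xc ((\<lambda>x. {x}) ` U2)" unfolding openin_Xc by (rule exI, rule conjI[OF oY(2) refl])
  have oX3: "openin Xc ((\<lambda>x. {x}) ` V)" unfolding openin_Xc by (rule exI, rule conjI[OF oY(3) refl])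
  note oX = oX1 oX2 oX3
  define Us where "Us = {A \<in> Fn_set Xc 2. A \<inter> (\<lambda>x. {x}) ` U1 \<noteq> {}} \<inter> {A \<in> Fn_set Xc 2. A \<inter> (\<lambda>x. {x}) ` U2 \<noteq> {}}"
  define Vs where "Vs = {A \<in> Fn_set Xc 2. A \<subseteq> (\<lambda>x. {x}) ` V}"
  have oUs: "openin (Fn Xc 2) Us" unfolding Us_def
    by (rule openin_Int[OF open_meet[OF oX(1)] open_meet[OF oX(2)]])
  have oVs: "openin (Fn Xc 2) Vs" unfolding Vs_def by (rule open_sub[OF oX(3)])
  have t1: "{1/4::real} \<in> topspace Xc" "{3/4::real} \<in> topspace Xc" "{1/2::real} \<in> topspace Xc"
    unfolding topspace_Xc by auto
  have p2: "{{1/4::real}, {3/4}} \<in> Fn_set Xc 2" by (rule pair_in[OF t1(1) t1(2)]) simp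
  have m: "(1/4::real) \<in> U1" "(3/4::real) \<in> U2" "(1/2::real) \<in> V"
    unfolding U1_def U2_def V_def by simp_all
  have "{1/4::real} \<in> {{1/4::real}, {3/4}} \<inter> (\<lambda>x. {x}) ` U1" using m(1) by blast
  moreover have "{3/4::real} \<in> {{1/4::real}, {3/4}} \<inter> (\<lambda>x. {x}) ` U2" using m(2) by blast
  ultimately have "{{1/4::real}, {3/4}} \<in> Us" unfolding Us_def using p2 by blast
  then have neU: "Us \<noteq> {}" by blast
  have s1: "{{1/2::real}} \<in> Fn_set Xc 2" by (rule single_in[OF t1(3)]) simp
  have "{{1/2::real}} \<subseteq> (\<lambda>x. {x}) ` V" using m(3) by blast
  then have "{{1/2::real}} \<in> Vs" unfolding Vs_def using s1 by blast
  then have neV: "Vs \<noteq> {}" by blast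
  have inf: "infinite {k. Us \<inter> {x \<in> topspace (Fn Xc 2). (Fn_map (Fc \<theta>) ^^ k) x \<in> Vs} \<noteq> {}}"
    using T[unfolded TTpp_def, rule_format, OF oUs oVs neU neV] .
  have empty: "Us \<inter> {x \<in> topspace (Fn Xc 2). (Fn_map (Fc \<theta>) ^^ k) x \<in> Vs} = {}" for k
  proof (rule ccontr)
    assume "Us \<inter> {x \<in> topspace (Fn Xc 2). (Fn_map (Fc \<theta>) ^^ k) x \<in> Vs} \<noteq> {}"
    then obtain A where A: "A \<in> Us" "(Fn_map (Fc \<theta>) ^^ k) A \<in> Vs" by blast
    obtain a where a: "{a} \<in> A" "a \<in> U1" using A(1) unfolding Us_def by blast
    obtain b where b: "{b} \<in> A" "b \<in> U2" using A(1) unfolding Us_def by blast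
    have img: "(Fc \<theta> ^^ k) ` A \<subseteq> (\<lambda>x. {x}) ` V" using A(2) unfolding Vs_def Fn_map_pow by blast
    have "{(rot \<theta> ^^ k) a} \<in> (\<lambda>x. {x}) ` V" using img a(1) Fc_pow[where \<theta>=\<theta> and k=k and x=a] by blast
    then have ra: "(rot \<theta> ^^ k) a \<in> V" by auto
    have "{(rot \<theta> ^^ k) b} \<in> (\<lambda>x. {x}) ` V" using img b(1) Fc_pow[where \<theta>=\<theta> and k=k and x=b] by blast
    then have rb: "(rot \<theta> ^^ k) b \<in> V" by auto
    define z where "z = ((rot \<theta> ^^ k) a - a - real k * \<theta>) - ((rot \<theta> ^^ k) b - b - real k * \<theta>)"
    have zI: "z \<in> \<int>" unfolding z_def by (rule Ints_diff[OF rot_pow_int rot_pow_int])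
    have h: "2/5 < (rot \<theta> ^^ k) a" "(rot \<theta> ^^ k) a < 3/5" "2/5 < (rot \<theta> ^^ k) b" "(rot \<theta> ^^ k) b < 3/5"
      "1/5 < a" "a < 3/10" "7/10 < b" "b < 4/5"
      using ra rb a(2) b(2) unfolding U1_def U2_def V_def by simp_all
    have z: "0 < z" "z < 1" unfolding z_def using h by linarith+
    then have "\<bar>z\<bar> < 1" by simp
    from Ints_nonzero_abs_less1[OF zI this] show False using z by simp
  qed
  then have "{k. Us \<inter> {x \<in> topspace (Fn Xc 2). (Fn_map (Fc \<theta>) ^^ k) x \<in> Vs} \<noteq> {}} = {}" by simp
  then show False using inf by simp
qed

theorem theorem20:
  shows "(\<forall>(X :: 'a topology) (n::nat) f.
            compactum X \<longrightarrow> n \<ge> 2 \<longrightarrow> f ` topspace X \<subseteq> topspace X \<longrightarrow>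
              (TTpp (Fn X n) (Fn_map f) \<longleftrightarrow> TTpp (SFn X n) (SFn_map X f)) \<and>
              (TTpp (Fn X n) (Fn_map f) \<longrightarrow> TTpp X f))
       \<and> (\<exists>(X :: real set topology) (n::nat) f.
            compactum X \<and> n \<ge> 2 \<and> f ` topspace X \<subseteq> topspace X \<and>
            TTpp X f \<and> \<not> TTpp (Fn X n) (Fn_map f))"
proof (rule conjI[OF general_part])
  have "\<exists>\<theta>::real. \<theta> \<notin> \<rat>"
  proof (rule ccontr)
    assume "\<not> (\<exists>\<theta>::real. \<theta> \<notin> \<rat>)"
    then have "(UNIV::real set) \<subseteq> \<rat>" by blast
    then have "countable (UNIV::real set)" by (rule countable_subset[OF _ countable_rat])
    then show False using uncountable_UNIV_real by simp
  qed
  then obtain \<theta> :: real where irr: "\<theta> \<notin> \<rat>" by blast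
  show "\<exists>(X :: real set topology) (n::nat) f.
            compactum X \<and> n \<ge> 2 \<and> f ` topspace X \<subseteq> topspace X \<and>
            TTpp X f \<and> \<not> TTpp (Fn X n) (Fn_map f)"
  proof (rule exI[of _ Xc], rule exI[of _ "2::nat"], rule exI[of _ "Fc \<theta>"])
    show "compactum Xc \<and> (2::nat) \<ge> 2 \<and> Fc \<theta> ` topspace Xc \<subseteq> topspace Xc \<and>
            TTpp Xc (Fc \<theta>) \<and> \<not> TTpp (Fn Xc 2) (Fn_map (Fc \<theta>))"
      by (intro conjI compactum_Xc Fc_maps TT_Fc[OF irr] not_TT_Fn order_refl)
  qed
qed

end
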